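(* Let $q$ be a power of a prime $p$ and let $X=\{F=0\}\subset\mathbb{P}^n$ be a Frobenius nonclassical hypersurface of degree $d$ over $\mathbb{F}_q$. If $d\leq q+1$ and $F$ is not a $p$-th power, then $X$ contains at least one $\mathbb{F}_q$-point.
   Context: $X$ is Frobenius nonclassical if $F$ divides $\sum_{i=0}^n x_i^q\frac{\partial F}{\partial x_i}$. "$F$ is a $p$-th power" means $F=G^p$ for some polynomial $G$. *)

theory Defs
  imports "HOL-Library.Poly_Mapping" "HOL-Computational_Algebra.Primes"
begin

text \<open>Multivariate polynomials over a ring 'a in the variables x_0, x_1, ...:
  a polynomial is a finitely supported map from monomials (exponent vectors,
  finitely supported maps nat to nat) to coefficients.\<close>
type_synonym 'a mpoly = "(nat \<Rightarrow>\<^sub>0 nat) \<Rightarrow>\<^sub>0 'a"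

definition mpoly_var :: "nat \<Rightarrow> 'a::comm_ring_1 mpoly" where
  "mpoly_var i = Poly_Mapping.single (Poly_Mapping.single i 1) 1"

definition mpoly_eval :: "'a::comm_ring_1 mpoly \<Rightarrow> (nat \<Rightarrow> 'a) \<Rightarrow> 'a" where
  "mpoly_eval F a = (\<Sum>m\<in>Poly_Mapping.keys F. Poly_Mapping.lookup F m * (\<Prod>i\<in>Poly_Mapping.keys m. a i ^ Poly_Mapping.lookup m (i::nat)))"

definition mpoly_pderiv :: "nat \<Rightarrow> 'a::comm_ring_1 mpoly \<Rightarrow> 'a mpoly" where
  "mpoly_pderiv i F =
     (\<Sum>m\<in>Poly_Mapping.keys F. Poly_Mapping.single (m - Poly_Mapping.single i 1)
                                        (of_nat (Poly_Mapping.lookup m i) * Poly_Mapping.lookup F m))"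

definition mon_deg :: "(nat \<Rightarrow>\<^sub>0 nat) \<Rightarrow> nat" where
  "mon_deg m = (\<Sum>i\<in>Poly_Mapping.keys m. Poly_Mapping.lookup m i)"

definition homogeneous :: "nat \<Rightarrow> 'a::comm_ring_1 mpoly \<Rightarrow> bool" where
  "homogeneous d F \<longleftrightarrow> (\<forall>m\<in>Poly_Mapping.keys F. mon_deg m = d)"

definition vars_in :: "nat \<Rightarrow> 'a::comm_ring_1 mpoly \<Rightarrow> bool" where
  "vars_in n F \<longleftrightarrow> (\<forall>m\<in>Poly_Mapping.keys F. Poly_Mapping.keys m \<subseteq> {..n})"

definition frobenius_nonclassical :: "nat \<Rightarrow> nat \<Rightarrow> 'a::comm_ring_1 mpoly \<Rightarrow> bool" where
  "frobenius_nonclassical q n F \<longleftrightarrow>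
     F dvd (\<Sum>i\<le>n. mpoly_var i ^ q * mpoly_pderiv i F)"

end

theory Submission
  imports Defs "HOL-Library.FuncSet" "HOL-Computational_Algebra.Polynomial"
begin


lemma pm_expand: "(P::('b \<Rightarrow>\<^sub>0 'a::comm_monoid_add)) = (\<Sum>m\<in>Poly_Mapping.keys P. Poly_Mapping.single m (Poly_Mapping.lookup P m))"
proof (rule poly_mapping_eqI)
  fix k
  show "Poly_Mapping.lookup P k = Poly_Mapping.lookup (\<Sum>m\<in>Poly_Mapping.keys P. Poly_Mapping.single m (Poly_Mapping.lookup P m)) k"
    by (simp add: lookup_sum lookup_single when_def in_keys_iff)
qed

definition mmono :: "(nat \<Rightarrow>\<^sub>0 nat) \<Rightarrow> (nat \<Rightarrow> 'a::comm_ring_1) \<Rightarrow> 'a" where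
  "mmono m a = (\<Prod>i\<in>Poly_Mapping.keys m. a i ^ Poly_Mapping.lookup m i)"

lemma mmono_superset: "finite S \<Longrightarrow> Poly_Mapping.keys m \<subseteq> S \<Longrightarrow> mmono m a = (\<Prod>i\<in>S. a i ^ Poly_Mapping.lookup m i)"
  unfolding mmono_def by (rule prod.mono_neutral_left) (auto simp: in_keys_iff)

lemma mmono_add: "mmono (m + m') a = mmono m a * mmono m' a"
proof -
  let ?S = "Poly_Mapping.keys m \<union> Poly_Mapping.keys m'"
  have "mmono (m + m') a = (\<Prod>i\<in>?S. a i ^ Poly_Mapping.lookup (m+m') i)"
    by (rule mmono_superset) (auto dest: set_mp[OF keys_add])
  also have "\<dots> = (\<Prod>i\<in>?S. a i ^ Poly_Mapping.lookup m i) * (\<Prod>i\<in>?S. a i ^ Poly_Mapping.lookup m' i)"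
    by (simp add: lookup_add power_add prod.distrib)
  also have "\<dots> = mmono m a * mmono m' a"
    using mmono_superset[of ?S m a] mmono_superset[of ?S m' a] by simp
  finally show ?thesis .
qed

lemma mmono_zero[simp]: "mmono 0 a = 1" by (simp add: mmono_def)
lemma mmono_single: "mmono (Poly_Mapping.single i k) a = a i ^ k" by (simp add: mmono_def)

lemma eval_superset: "finite S \<Longrightarrow> Poly_Mapping.keys F \<subseteq> S \<Longrightarrow>
   mpoly_eval F a = (\<Sum>m\<in>S. Poly_Mapping.lookup F m * mmono m a)"
  unfolding mpoly_eval_def mmono_def[symmetric] by (rule sum.mono_neutral_left) (auto simp: in_keys_iff)

lemma eval_add: "mpoly_eval (F + G) a = mpoly_eval F a + mpoly_eval G a"
proof -
  let ?S = "Poly_Mapping.keys F \<union> Poly_Mapping.keys G"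
  have "mpoly_eval (F + G) a = (\<Sum>m\<in>?S. Poly_Mapping.lookup (F+G) m * mmono m a)"
    by (rule eval_superset) (auto dest: set_mp[OF keys_add])
  also have "\<dots> = (\<Sum>m\<in>?S. Poly_Mapping.lookup F m * mmono m a) + (\<Sum>m\<in>?S. Poly_Mapping.lookup G m * mmono m a)"
    by (simp add: lookup_add distrib_right sum.distrib)
  also have "\<dots> = mpoly_eval F a + mpoly_eval G a"
    using eval_superset[of ?S F a] eval_superset[of ?S G a] by simp
  finally show ?thesis .
qed

lemma eval_zero[simp]: "mpoly_eval 0 a = 0" by (simp add: mpoly_eval_def)

lemma eval_single: "mpoly_eval (Poly_Mapping.single m c) a = c * mmono m a"
  by (simp add: mpoly_eval_def mmono_def)

lemma eval_sum: "mpoly_eval (sum f A) a = (\<Sum>x\<in>A. mpoly_eval (f x) a)"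
  by (induction A rule: infinite_finite_induct) (simp_all add: eval_add)

lemma pm_mult_expand:
  fixes F G :: "'a::comm_ring_1 mpoly"
  shows "F * G = (\<Sum>m\<in>Poly_Mapping.keys F. \<Sum>m'\<in>Poly_Mapping.keys G.
      Poly_Mapping.single (m + m') (Poly_Mapping.lookup F m * Poly_Mapping.lookup G m'))"
proof -
  have "F * G = (\<Sum>m\<in>Poly_Mapping.keys F. Poly_Mapping.single m (Poly_Mapping.lookup F m)) *
     (\<Sum>m'\<in>Poly_Mapping.keys G. Poly_Mapping.single m' (Poly_Mapping.lookup G m'))"
    using pm_expand[of F] pm_expand[of G] by simp
  also have "\<dots> = (\<Sum>m\<in>Poly_Mapping.keys F. \<Sum>m'\<in>Poly_Mapping.keys G.
      Poly_Mapping.single m (Poly_Mapping.lookup F m) * Poly_Mapping.single m' (Poly_Mapping.lookup G m'))"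
    by (rule sum_product)
  finally show ?thesis by (simp add: mult_single)
qed

lemma eval_mult: "mpoly_eval (F * G) a = mpoly_eval F a * mpoly_eval G a"
  apply (subst pm_mult_expand)
  apply (simp add: eval_sum eval_single mmono_add mpoly_eval_def[of F] mpoly_eval_def[of G]
      mmono_def[symmetric] sum_product)
  apply (rule sum.cong, simp)+
  apply (simp add: ac_simps)
  done

lemma eval_one[simp]: "mpoly_eval 1 a = 1"
  by (simp add: mpoly_eval_def)

lemma eval_power: "mpoly_eval (F ^ k) a = mpoly_eval F a ^ k"
  by (induction k) (simp_all add: eval_mult)

lemma eval_var: "mpoly_eval (mpoly_var i) a = a i"
  by (simp add: mpoly_var_def eval_single mmono_single)

lemma eval_pderiv: "mpoly_eval (mpoly_pderiv i F) a =
   (\<Sum>m\<in>Poly_Mapping.keys F. of_nat (Poly_Mapping.lookup m i) * Poly_Mapping.lookup F m * mmono (m - Poly_Mapping.single i 1) a)"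
  by (simp add: mpoly_pderiv_def eval_sum eval_single)

definition flt :: "((nat \<Rightarrow>\<^sub>0 nat) \<Rightarrow> bool) \<Rightarrow> 'a::comm_ring_1 mpoly \<Rightarrow> 'a mpoly" where
  "flt P F = (\<Sum>m\<in>{m\<in>Poly_Mapping.keys F. P m}. Poly_Mapping.single m (Poly_Mapping.lookup F m))"

lemma lookup_flt: "Poly_Mapping.lookup (flt P F) m = (if P m then Poly_Mapping.lookup F m else 0)"
  by (simp add: flt_def lookup_sum lookup_single when_def in_keys_iff)

lemma flt_add: "flt P (F + G) = flt P F + flt P G"
  by (rule poly_mapping_eqI) (simp add: lookup_flt lookup_add)

lemma flt_zero[simp]: "flt P 0 = 0"
  by (rule poly_mapping_eqI) (simp add: lookup_flt)

lemma flt_sum: "flt P (sum f A) = (\<Sum>x\<in>A. flt P (f x))"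
  by (induction A rule: infinite_finite_induct) (simp_all add: flt_add)

lemma flt_single: "flt P (Poly_Mapping.single m c) = (if P m then Poly_Mapping.single m c else 0)"
  by (rule poly_mapping_eqI) (simp add: lookup_flt lookup_single when_def)

lemma flt_mult:
  fixes F G :: "'a::comm_ring_1 mpoly"
  assumes "\<And>a b. a \<in> Poly_Mapping.keys F \<Longrightarrow> P (a + b) = Q b"
  shows "flt P (F * G) = F * flt Q G"
proof -
  have "F * flt Q G = (\<Sum>m\<in>Poly_Mapping.keys F. Poly_Mapping.single m (Poly_Mapping.lookup F m)) *
     (\<Sum>m'\<in>Poly_Mapping.keys G. flt Q (Poly_Mapping.single m' (Poly_Mapping.lookup G m')))"
    using pm_expand[of F] pm_expand[of G] by (metis flt_sum)
  also have "\<dots> = (\<Sum>m\<in>Poly_Mapping.keys F. \<Sum>m'\<in>Poly_Mapping.keys G.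
      Poly_Mapping.single m (Poly_Mapping.lookup F m) * flt Q (Poly_Mapping.single m' (Poly_Mapping.lookup G m')))"
    by (rule sum_product)
  also have "\<dots> = (\<Sum>m\<in>Poly_Mapping.keys F. \<Sum>m'\<in>Poly_Mapping.keys G.
      flt P (Poly_Mapping.single (m + m') (Poly_Mapping.lookup F m * Poly_Mapping.lookup G m')))"
    by (intro sum.cong refl) (simp add: flt_single mult_single assms)
  also have "\<dots> = flt P (F * G)"
    by (simp add: pm_mult_expand[of F G] flt_sum)
  finally show ?thesis by simp
qed


lemma mon_deg_superset: "finite S \<Longrightarrow> Poly_Mapping.keys m \<subseteq> S \<Longrightarrow> mon_deg m = (\<Sum>i\<in>S. Poly_Mapping.lookup m i)"
  unfolding mon_deg_def by (rule sum.mono_neutral_left) (auto simp: in_keys_iff)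

lemma mon_deg_add: "mon_deg (m + m') = mon_deg m + mon_deg m'"
proof -
  let ?S = "Poly_Mapping.keys m \<union> Poly_Mapping.keys m'"
  have "mon_deg (m + m') = (\<Sum>i\<in>?S. Poly_Mapping.lookup (m+m') i)"
    by (rule mon_deg_superset) (auto dest: set_mp[OF keys_add])
  also have "\<dots> = (\<Sum>i\<in>?S. Poly_Mapping.lookup m i) + (\<Sum>i\<in>?S. Poly_Mapping.lookup m' i)"
    by (simp add: lookup_add sum.distrib)
  also have "\<dots> = mon_deg m + mon_deg m'"
    using mon_deg_superset[of ?S m] mon_deg_superset[of ?S m'] by simp
  finally show ?thesis .
qed

lemma mon_deg_single[simp]: "mon_deg (Poly_Mapping.single i k) = k"
  by (simp add: mon_deg_def)

lemma mon_deg_zero[simp]: "mon_deg 0 = 0"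
  by (simp add: mon_deg_def)

lemma lookup_le_mon_deg: "Poly_Mapping.lookup m i \<le> mon_deg m"
proof (cases "i \<in> Poly_Mapping.keys m")
  case True
  then show ?thesis unfolding mon_deg_def by (intro member_le_sum) auto
next
  case False
  then show ?thesis by (simp add: in_keys_iff)
qed

lemma minus_plus_single: "1 \<le> Poly_Mapping.lookup m i \<Longrightarrow> (m - Poly_Mapping.single i 1) + Poly_Mapping.single i 1 = (m :: nat \<Rightarrow>\<^sub>0 nat)"
  by (rule poly_mapping_eqI) (auto simp add: lookup_add lookup_minus lookup_single when_def)

lemma mmono_dec: "1 \<le> Poly_Mapping.lookup m i \<Longrightarrow> a i * mmono (m - Poly_Mapping.single i 1) a = mmono m a"
  using mmono_add[of "m - Poly_Mapping.single i 1" "Poly_Mapping.single i 1" a] minus_plus_single[of m i]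
  by (simp only: mmono_single power_one_right mult.commute)

lemma mon_deg_dec: "1 \<le> Poly_Mapping.lookup m i \<Longrightarrow> mon_deg (m - Poly_Mapping.single i 1) = mon_deg m - 1"
  using mon_deg_add[of "m - Poly_Mapping.single i 1" "Poly_Mapping.single i 1"] minus_plus_single[of m i]
  by (simp only: mon_deg_single)

lemma keys_dec: "Poly_Mapping.keys (m - Poly_Mapping.single i 1) \<subseteq> Poly_Mapping.keys (m :: nat \<Rightarrow>\<^sub>0 nat)"
  by (auto simp: in_keys_iff lookup_minus)

lemma euler:
  fixes F :: "'a::comm_ring_1 mpoly"
  assumes "homogeneous d F" "vars_in n F"
  shows "(\<Sum>i\<le>n. a i * mpoly_eval (mpoly_pderiv i F) a) = of_nat d * mpoly_eval F a"
proof -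
  have "(\<Sum>i\<le>n. a i * mpoly_eval (mpoly_pderiv i F) a) =
     (\<Sum>i\<le>n. \<Sum>m\<in>Poly_Mapping.keys F. a i * (of_nat (Poly_Mapping.lookup m i) * Poly_Mapping.lookup F m * mmono (m - Poly_Mapping.single i 1) a))"
    by (simp only: eval_pderiv sum_distrib_left)
  also have "\<dots> = (\<Sum>i\<le>n. \<Sum>m\<in>Poly_Mapping.keys F. of_nat (Poly_Mapping.lookup m i) * (Poly_Mapping.lookup F m * mmono m a))"
  proof (intro sum.cong refl)
    fix i m
    show "a i * (of_nat (Poly_Mapping.lookup m i) * Poly_Mapping.lookup F m * mmono (m - Poly_Mapping.single i 1) a) =
      of_nat (Poly_Mapping.lookup m i) * (Poly_Mapping.lookup F m * mmono m a)"
    proof (cases "Poly_Mapping.lookup m i = 0")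
      case True then show ?thesis by simp
    next
      case False
      then have "a i * mmono (m - Poly_Mapping.single i 1) a = mmono m a" by (intro mmono_dec) simp
      then show ?thesis by (metis mult.left_commute mult.assoc)
    qed
  qed
  also have "\<dots> = (\<Sum>m\<in>Poly_Mapping.keys F. \<Sum>i\<le>n. of_nat (Poly_Mapping.lookup m i) * (Poly_Mapping.lookup F m * mmono m a))"
    by (rule sum.swap)
  also have "\<dots> = (\<Sum>m\<in>Poly_Mapping.keys F. of_nat (\<Sum>i\<le>n. Poly_Mapping.lookup m i) * (Poly_Mapping.lookup F m * mmono m a))"
    by (simp only: of_nat_sum sum_distrib_right)
  also have "\<dots> = (\<Sum>m\<in>Poly_Mapping.keys F. of_nat d * (Poly_Mapping.lookup F m * mmono m a))"
  proof (intro sum.cong refl)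
    fix m assume m: "m \<in> Poly_Mapping.keys F"
    have "(\<Sum>i\<le>n. Poly_Mapping.lookup m i) = mon_deg m"
      using assms(2) m unfolding vars_in_def by (intro mon_deg_superset[symmetric]) auto
    also have "\<dots> = d" using assms(1) m unfolding homogeneous_def by auto
    finally show "of_nat (\<Sum>i\<le>n. Poly_Mapping.lookup m i) * (Poly_Mapping.lookup F m * mmono m a) = of_nat d * (Poly_Mapping.lookup F m * mmono m a)"
      by simp
  qed
  also have "\<dots> = of_nat d * mpoly_eval F a"
    unfolding mpoly_eval_def mmono_def by (rule sum_distrib_left[symmetric])
  finally show ?thesis .
qed

lemma var_power: "mpoly_var i ^ k = Poly_Mapping.single (Poly_Mapping.single i k) (1::'a::comm_ring_1)"
proof (induction k)
  case 0 then show ?case by simp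
next
  case (Suc k)
  then show ?case by (simp add: power_Suc2 mpoly_var_def mult_single single_add[symmetric])
qed

lemma keys_pderiv: "Poly_Mapping.keys (mpoly_pderiv i F) \<subseteq>
   {m - Poly_Mapping.single i 1 | m. m \<in> Poly_Mapping.keys F \<and> 1 \<le> Poly_Mapping.lookup m i}"
proof
  fix k assume k: "k \<in> Poly_Mapping.keys (mpoly_pderiv i F)"
  have "k \<in> (\<Union>m\<in>Poly_Mapping.keys F. Poly_Mapping.keys (Poly_Mapping.single (m - Poly_Mapping.single i 1)
                                        (of_nat (Poly_Mapping.lookup m i) * Poly_Mapping.lookup F m)))"
    using k unfolding mpoly_pderiv_def by (rule subsetD[OF keys_sum])
  then obtain m where m: "m \<in> Poly_Mapping.keys F" and
    km: "k \<in> Poly_Mapping.keys (Poly_Mapping.single (m - Poly_Mapping.single i 1)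
         (of_nat (Poly_Mapping.lookup m i) * Poly_Mapping.lookup F m))"
    by (rule UN_E)
  have "k \<in> (if of_nat (Poly_Mapping.lookup m i) * Poly_Mapping.lookup F m = 0 then {} else {m - Poly_Mapping.single i 1})"
    using km by (simp only: keys_single)
  then have nz: "of_nat (Poly_Mapping.lookup m i) * Poly_Mapping.lookup F m \<noteq> 0" and "k = m - Poly_Mapping.single i 1"
    by (metis empty_iff singletonD)+
  moreover have "Poly_Mapping.lookup m i \<noteq> 0" using nz by (rule contrapos_nn) simp
  ultimately show "k \<in> {m - Poly_Mapping.single i 1 | m. m \<in> Poly_Mapping.keys F \<and> 1 \<le> Poly_Mapping.lookup m i}"
    using m by auto
qed

lemma keys_H:
  fixes F :: "'a::comm_ring_1 mpoly"
  assumes "homogeneous d F" "vars_in n F" "d \<ge> 1"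
  shows "homogeneous (d + q - 1) (\<Sum>i\<le>n. mpoly_var i ^ q * mpoly_pderiv i F)"
    and "vars_in n (\<Sum>i\<le>n. mpoly_var i ^ q * mpoly_pderiv i F)"
proof -
  have *: "mon_deg k = d + q - 1 \<and> Poly_Mapping.keys k \<subseteq> {..n}"
    if "k \<in> Poly_Mapping.keys (\<Sum>i\<le>n. mpoly_var i ^ q * mpoly_pderiv i F)" for k
  proof -
    have "k \<in> (\<Union>i\<in>{..n}. Poly_Mapping.keys (mpoly_var i ^ q * mpoly_pderiv i F))"
      using that by (rule subsetD[OF keys_sum])
    then obtain i where i: "i \<le> n" "k \<in> Poly_Mapping.keys (mpoly_var i ^ q * mpoly_pderiv i F)"
      by blast
    then have "k \<in> {u + b | u b. u \<in> Poly_Mapping.keys (mpoly_var i ^ q :: 'a mpoly) \<and> b \<in> Poly_Mapping.keys (mpoly_pderiv i F)}"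
      by (intro subsetD[OF keys_mult])
    then obtain u b where kub: "k = u + b" and u: "u \<in> Poly_Mapping.keys (mpoly_var i ^ q :: 'a mpoly)"
      and b: "b \<in> Poly_Mapping.keys (mpoly_pderiv i F)"
      by blast
    have u': "u = Poly_Mapping.single i q" using u by (simp add: var_power)
    obtain m where bm: "b = m - Poly_Mapping.single i 1"
      and m: "m \<in> Poly_Mapping.keys F" "1 \<le> Poly_Mapping.lookup m i"
      using subsetD[OF keys_pderiv b] by blast
    have k: "k = Poly_Mapping.single i q + (m - Poly_Mapping.single i 1)"
      using kub u' bm by simp
    have "mon_deg m = d" using assms(1) m unfolding homogeneous_def by auto
    then have "mon_deg k = d + q - 1"
      unfolding k mon_deg_add mon_deg_dec[OF m(2)] mon_deg_single using assms(3) by simp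
    moreover have "Poly_Mapping.keys k \<subseteq> {..n}"
    proof -
      have "Poly_Mapping.keys m \<subseteq> {..n}" using assms(2) m unfolding vars_in_def by auto
      moreover have "Poly_Mapping.keys (Poly_Mapping.single i q) \<subseteq> {..n}" using i(1) by simp
      ultimately show ?thesis
        using keys_add[of "Poly_Mapping.single i q" "m - Poly_Mapping.single i 1"] keys_dec[of m i]
        unfolding k by blast
    qed
    ultimately show ?thesis by blast
  qed
  show "homogeneous (d + q - 1) (\<Sum>i\<le>n. mpoly_var i ^ q * mpoly_pderiv i F)"
    using * unfolding homogeneous_def by blast
  show "vars_in n (\<Sum>i\<le>n. mpoly_var i ^ q * mpoly_pderiv i F)"
    using * unfolding vars_in_def by blast
qed

lemma keys_add_nat: "Poly_Mapping.keys (a + b) = Poly_Mapping.keys a \<union> Poly_Mapping.keys (b :: nat \<Rightarrow>\<^sub>0 nat)"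
  by (auto simp: in_keys_iff lookup_add)

lemma flt_id: "(\<And>m. m \<in> Poly_Mapping.keys F \<Longrightarrow> P m) \<Longrightarrow> flt P F = F"
  by (rule poly_mapping_eqI) (auto simp: lookup_flt in_keys_iff)

lemma flt_none: "(\<And>m. m \<in> Poly_Mapping.keys F \<Longrightarrow> \<not> P m) \<Longrightarrow> flt P F = 0"
  by (rule poly_mapping_eqI) (auto simp: lookup_flt in_keys_iff)

lemma G_vars:
  fixes F G :: "'a::idom mpoly"
  assumes "F \<noteq> 0" "vars_in n F" "vars_in n (F * G)"
  shows "vars_in n G"
proof -
  let ?R = "\<lambda>m::nat \<Rightarrow>\<^sub>0 nat. Poly_Mapping.keys m \<subseteq> {..n}"
  have "flt ?R (F * G) = F * flt ?R G"
  proof (rule flt_mult)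
    fix a b assume "a \<in> Poly_Mapping.keys F"
    then have "Poly_Mapping.keys a \<subseteq> {..n}" using assms(2) unfolding vars_in_def by blast
    then show "?R (a + b) = ?R b" by (auto simp: keys_add_nat)
  qed
  moreover have "flt ?R (F * G) = F * G"
    using assms(3) unfolding vars_in_def by (intro flt_id) blast
  ultimately have "F * G = F * flt ?R G" by simp
  then have GG: "G = flt ?R G" using assms(1) by simp
  show ?thesis unfolding vars_in_def
  proof
    fix m assume "m \<in> Poly_Mapping.keys G"
    then have "Poly_Mapping.lookup (flt ?R G) m \<noteq> 0" using GG by (simp add: in_keys_iff)
    then show "?R m" by (simp add: lookup_flt split: if_splits)
  qed
qed

lemma G_homog:
  fixes F G :: "'a::idom mpoly"
  assumes "F \<noteq> 0" "homogeneous d F" "homogeneous (d + e) (F * G)"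
  shows "homogeneous e G"
  unfolding homogeneous_def
proof
  fix m assume m: "m \<in> Poly_Mapping.keys G"
  show "mon_deg m = e"
  proof (rule ccontr)
    assume ne: "mon_deg m \<noteq> e"
    let ?k = "mon_deg m"
    have "flt (\<lambda>b. mon_deg b = d + ?k) (F * G) = F * flt (\<lambda>b. mon_deg b = ?k) G"
    proof (rule flt_mult)
      fix a b assume "a \<in> Poly_Mapping.keys F"
      then have "mon_deg a = d" using assms(2) unfolding homogeneous_def by blast
      then show "(mon_deg (a + b) = d + ?k) = (mon_deg b = ?k)" by (simp add: mon_deg_add)
    qed
    moreover have "flt (\<lambda>b. mon_deg b = d + ?k) (F * G) = 0"
      using assms(3) ne unfolding homogeneous_def by (intro flt_none) auto
    ultimately have "flt (\<lambda>b. mon_deg b = ?k) G = 0" using assms(1) by simp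
    then have "Poly_Mapping.lookup (flt (\<lambda>b. mon_deg b = ?k) G) m = 0" by simp
    then show False using m by (simp add: lookup_flt in_keys_iff)
  qed
qed



lemma freshman:
  fixes x y :: "'a::comm_ring_1"
  assumes p: "prime p" and c: "of_nat p = (0::'a)"
  shows "(x + y) ^ p = x ^ p + y ^ p"
proof -
  have "(x + y) ^ p = (\<Sum>k\<le>p. of_nat (p choose k) * x ^ k * y ^ (p - k))"
    by (rule binomial_ring)
  also have "\<dots> = (\<Sum>k\<in>{0, p}. of_nat (p choose k) * x ^ k * y ^ (p - k))"
  proof (rule sum.mono_neutral_right)
    show "\<forall>k\<in>{..p} - {0, p}. of_nat (p choose k) * x ^ k * y ^ (p - k) = 0"
    proof
      fix k assume k: "k \<in> {..p} - {0, p}"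
      then have "p dvd (p choose k)" using p by (intro dvd_choose_prime) auto
      then obtain t where "p choose k = p * t" by blast
      then have "of_nat (p choose k) = (0::'a)" using c by simp
      then show "of_nat (p choose k) * x ^ k * y ^ (p - k) = 0" by simp
    qed
  qed auto
  also have "\<dots> = x ^ p + y ^ p"
    using p by (simp add: prime_gt_0_nat)
  finally show ?thesis .
qed

lemma ff_power_card:
  fixes x :: "'a::{finite,field}"
  shows "x ^ card (UNIV :: 'a set) = x"
proof (cases "x = 0")
  case False
  have "x * (\<Prod>y\<in>UNIV-{0}. x * y) = x * x ^ (card (UNIV :: 'a set) - 1) * \<Prod>(UNIV-{0})"
    by (simp add: prod.distrib mult_ac)
  also have "x * x ^ (card (UNIV :: 'a set) - 1) = x ^ Suc (card (UNIV :: 'a set) - 1)"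
    by (subst power_Suc) auto
  also have "Suc (card (UNIV :: 'a set) - 1) = card (UNIV :: 'a set)"
    using finite_UNIV_card_ge_0[where ?'a = 'a] by simp
  also have "(\<Prod>y\<in>UNIV-{0}. x * y) = (\<Prod>y\<in>UNIV-{0}. y)"
    by (rule prod.reindex_bij_witness[of _ "\<lambda>y. y / x" "\<lambda>y. x * y"]) (use False in auto)
  finally show ?thesis
    by simp
qed (use finite_UNIV_card_ge_0[where ?'a = 'a] in auto)

lemma ff_card_zero: "of_nat (card (UNIV :: 'a::{finite,field} set)) = (0::'a)"
proof -
  have "(\<Sum>y\<in>(UNIV::'a set). 1 + y) = (\<Sum>y\<in>UNIV. y)"
    by (rule sum.reindex_bij_witness[of _ "\<lambda>y. y - 1" "\<lambda>y. 1 + y"]) auto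
  then show ?thesis by (simp add: sum.distrib)
qed

lemma ff_pow_q1:
  fixes x :: "'a::{finite,field}"
  assumes "x \<noteq> 0"
  shows "x ^ (card (UNIV :: 'a set) - 1) = 1"
proof -
  have c: "card (UNIV :: 'a set) = Suc (card (UNIV :: 'a set) - 1)"
    using finite_UNIV_card_ge_0[where ?'a = 'a] by simp
  have "x * x ^ (card (UNIV :: 'a set) - 1) = x ^ card (UNIV :: 'a set)"
    by (subst (2) c) (simp only: power_Suc)
  also have "\<dots> = x * 1" by (simp add: ff_power_card)
  finally show ?thesis using assms by simp
qed

definition psum :: "nat \<Rightarrow> 'a::{finite,field}" where
  "psum k = (\<Sum>x\<in>UNIV. x ^ k)"

lemma psum_zero: "psum 0 = (0::'a::{finite,field})"
  by (simp add: psum_def ff_card_zero)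

lemma psum_div:
  assumes "k > 0" "(card (UNIV :: 'a set) - 1) dvd k"
  shows "psum k = (-1 :: 'a::{finite,field})"
proof -
  have "psum k = (\<Sum>x\<in>UNIV - {0}. (x::'a) ^ k)"
    unfolding psum_def using assms(1) by (intro sum.mono_neutral_right) auto
  also have "\<dots> = (\<Sum>x\<in>UNIV - {0::'a}. 1)"
  proof (rule sum.cong[OF refl])
    fix x :: 'a assume "x \<in> UNIV - {0}"
    then have x: "x \<noteq> 0" by simp
    from assms(2) obtain t where "k = (card (UNIV :: 'a set) - 1) * t" by blast
    then show "x ^ k = 1" using ff_pow_q1[OF x] by (simp add: power_mult)
  qed
  also have "\<dots> = of_nat (card (UNIV :: 'a set)) - 1"
    using finite_UNIV_card_ge_0[where ?'a='a] by (simp add: card_Diff_subset of_nat_diff Suc_leI)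
  also have "\<dots> = -1" by (simp add: ff_card_zero)
  finally show ?thesis .
qed

lemma psum_ndiv:
  assumes "\<not> (card (UNIV :: 'a set) - 1) dvd k"
  shows "psum k = (0 :: 'a::{finite,field})"
proof -
  let ?q = "card (UNIV :: 'a set)"
  define r where "r = k mod (?q - 1)"
  have r0: "r > 0" using assms unfolding r_def by (simp add: dvd_eq_mod_eq_0)
  have "card {0::'a, 1} \<le> ?q" by (rule card_mono) auto
  then have q2: "?q \<ge> 2" by simp
  have rq: "r < ?q - 1" unfolding r_def using q2 by (intro mod_less_divisor) simp
  have "\<exists>c::'a. c \<noteq> 0 \<and> c ^ r \<noteq> 1"
  proof (rule ccontr)
    assume "\<not> ?thesis"
    then have all: "\<And>c::'a. c \<noteq> 0 \<Longrightarrow> c ^ r = 1" by blast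
    let ?P = "monom (1::'a) r - [:1:]"
    have P0: "?P \<noteq> 0"
    proof
      assume "?P = 0"
      then have "poly ?P 0 = 0" by simp
      then show False using r0 by (simp add: poly_monom zero_power)
    qed
    have "UNIV - {0::'a} \<subseteq> {x. poly ?P x = 0}"
      using all by (auto simp: poly_monom)
    then have "card (UNIV - {0::'a}) \<le> card {x. poly ?P x = 0}"
      by (intro card_mono) auto
    also have "\<dots> \<le> degree ?P" by (rule card_poly_roots_bound[OF P0])
    also have "\<dots> \<le> r"
      by (rule order.trans[OF degree_diff_le_max]) (simp add: degree_monom_le)
    finally have "?q - 1 \<le> r" by (simp add: card_Diff_subset)
    then show False using rq by simp
  qed
  then obtain c :: 'a where c: "c \<noteq> 0" "c ^ r \<noteq> 1" by blast
  have ck: "c ^ k = c ^ r"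
  proof -
    have "k = (?q - 1) * (k div (?q - 1)) + r" unfolding r_def by simp
    then have "c ^ k = (c ^ (?q - 1)) ^ (k div (?q - 1)) * c ^ r"
      by (metis power_add power_mult)
    then show ?thesis using ff_pow_q1[OF c(1)] by simp
  qed
  have "psum k = (\<Sum>x\<in>UNIV. (c * x) ^ k)"
    unfolding psum_def
    by (rule sum.reindex_bij_witness[of _ "\<lambda>y. c * y" "\<lambda>y. y / c"]) (use c in auto)
  also have "\<dots> = c ^ k * psum k"
    unfolding psum_def by (simp add: power_mult_distrib sum_distrib_left)
  finally have "(1 - c ^ k) * psum k = 0" by (simp add: algebra_simps)
  then show ?thesis using c ck by simp
qed

lemma CHAR_ff:
  assumes p: "prime p" and q: "card (UNIV :: 'a::{finite,field} set) = p ^ k"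
  shows "CHAR('a) = p"
proof -
  have fin: "finite (UNIV :: 'a set)" by simp
  have pos: "CHAR('a) > 0" by (rule finite_imp_CHAR_pos[OF fin])
  have pr: "prime CHAR('a)" using prime_CHAR_semidom[OF pos] .
  have "of_nat (p ^ k) = (0::'a)" using ff_card_zero[where 'a='a] q by metis
  then have "CHAR('a) dvd p ^ k" by (simp only: of_nat_eq_0_iff_char_dvd)
  then have "CHAR('a) dvd p" by (rule prime_dvd_power[OF pr])
  then show ?thesis by (rule primes_dvd_imp_eq[OF pr p])
qed

lemma frob_surj:
  fixes y :: "'a::{finite,field}"
  assumes "prime CHAR('a)"
  shows "\<exists>x. x ^ CHAR('a) = y"
proof -
  have "inj (\<lambda>x::'a. x ^ CHAR('a))"
  proof (rule injI)
    fix x z :: 'a assume "x ^ CHAR('a) = z ^ CHAR('a)"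
    moreover have "(x + (- z)) ^ CHAR('a) = x ^ CHAR('a) + (- z) ^ CHAR('a)"
      by (rule freshman[OF assms]) simp
    moreover have "(- z) ^ CHAR('a) = - (z ^ CHAR('a))"
      by (rule minus_power_prime_CHAR[OF refl assms])
    ultimately have "(x - z) ^ CHAR('a) = 0" by simp
    then show "x = z" by simp
  qed
  then have "surj (\<lambda>x::'a. x ^ CHAR('a))" using finite_UNIV_inj_surj[of "\<lambda>x::'a. x ^ CHAR('a)"] by simp
  then show ?thesis by (metis surjD)
qed



lemma sum_PiE_prod:
  "(\<Sum>a\<in>PiE {..(n::nat)} (\<lambda>_. UNIV). \<Prod>i\<le>n. (a i::'a::{finite,field}) ^ k i) = (\<Prod>i\<le>n. psum (k i))"
  unfolding psum_def by (rule prod_sum_PiE[symmetric]) auto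

lemma eval_vars:
  assumes "vars_in n P"
  shows "mpoly_eval P a = (\<Sum>m\<in>Poly_Mapping.keys P. Poly_Mapping.lookup P m * (\<Prod>i\<le>n. a i ^ Poly_Mapping.lookup m i))"
  unfolding mpoly_eval_def
proof (intro sum.cong refl)
  fix m assume "m \<in> Poly_Mapping.keys P"
  then have "Poly_Mapping.keys m \<subseteq> {..n}" using assms unfolding vars_in_def by blast
  then show "Poly_Mapping.lookup P m * (\<Prod>i\<in>Poly_Mapping.keys m. a i ^ Poly_Mapping.lookup m i) =
    Poly_Mapping.lookup P m * (\<Prod>i\<le>n. a i ^ Poly_Mapping.lookup m i)"
    using mmono_superset[of "{..n}" m a] unfolding mmono_def by simp
qed

lemma psum_nz:
  assumes "psum k \<noteq> (0::'a::{finite,field})"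
  shows "k > 0" "(card (UNIV :: 'a set) - 1) dvd k"
  using assms psum_zero[where 'a='a] psum_ndiv[where 'a='a and k=k] by (cases k; auto)+

lemma card_ge2: "card (UNIV :: 'a::{finite,field} set) \<ge> 2"
proof -
  have "card {0::'a, 1} \<le> card (UNIV :: 'a set)" by (rule card_mono) auto
  then show ?thesis by simp
qed

lemma sum_contra:
  fixes G :: "'a::{finite,field} mpoly"
  assumes q: "card (UNIV::'a set) = q" and n: "n \<ge> 1" and G0: "G \<noteq> 0"
    and vG: "vars_in n G" and hG: "homogeneous (q - 1) G"
    and val: "\<And>a. (\<exists>i\<le>n. a i \<noteq> 0) \<Longrightarrow> mpoly_eval G a = c"
  shows False
proof -
  have q2: "q \<ge> 2" using card_ge2[where 'a='a] q by simp
  obtain e where e: "e \<in> Poly_Mapping.keys G" using G0 keys_eq_empty by blast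
  have ke: "Poly_Mapping.keys e \<subseteq> {..n}" using e vG unfolding vars_in_def by blast
  have sdeg: "\<And>m. m \<in> Poly_Mapping.keys G \<Longrightarrow> (\<Sum>i\<le>n. Poly_Mapping.lookup m i) = q - 1"
  proof -
    fix m assume m: "m \<in> Poly_Mapping.keys G"
    have "(\<Sum>i\<le>n. Poly_Mapping.lookup m i) = mon_deg m"
      using m vG unfolding vars_in_def by (intro mon_deg_superset[symmetric]) auto
    also have "\<dots> = q - 1" using m hG unfolding homogeneous_def by blast
    finally show "(\<Sum>i\<le>n. Poly_Mapping.lookup m i) = q - 1" .
  qed
  have ele: "\<And>i. Poly_Mapping.lookup e i \<le> q - 1"
    using lookup_le_mon_deg[of e] e hG unfolding homogeneous_def by metis
  have ele2: "\<And>i. Poly_Mapping.lookup e i + (q - 1 - Poly_Mapping.lookup e i) = q - 1"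
  proof -
    fix i show "Poly_Mapping.lookup e i + (q - 1 - Poly_Mapping.lookup e i) = q - 1"
      using ele[of i] by arith
  qed
  define w where "w a = (\<Prod>i\<le>n. (a i :: 'a) ^ (q - 1 - Poly_Mapping.lookup e i))" for a
  define A where "A = PiE {..n} (\<lambda>_. UNIV::'a set)"
  define T where "T = (\<Sum>a\<in>A. mpoly_eval G a * w a)"
  define k where "k m i = Poly_Mapping.lookup m i + (q - 1 - Poly_Mapping.lookup e i)" for m i
  have T1: "T = (\<Sum>m\<in>Poly_Mapping.keys G. Poly_Mapping.lookup G m * (\<Prod>i\<le>n. psum (k m i)))"
  proof -
    have "T = (\<Sum>a\<in>A. \<Sum>m\<in>Poly_Mapping.keys G. Poly_Mapping.lookup G m * (\<Prod>i\<le>n. a i ^ k m i))"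
      unfolding T_def w_def eval_vars[OF vG] k_def
      by (simp add: sum_distrib_right power_add prod.distrib mult.assoc)
    also have "\<dots> = (\<Sum>m\<in>Poly_Mapping.keys G. Poly_Mapping.lookup G m * (\<Sum>a\<in>A. \<Prod>i\<le>n. a i ^ k m i))"
      by (subst sum.swap) (simp add: sum_distrib_left)
    also have "\<dots> = (\<Sum>m\<in>Poly_Mapping.keys G. Poly_Mapping.lookup G m * (\<Prod>i\<le>n. psum (k m i)))"
      unfolding A_def by (simp add: sum_PiE_prod)
    finally show ?thesis .
  qed
  have others: "(\<Prod>i\<le>n. psum (k m i)) = (0::'a)" if m: "m \<in> Poly_Mapping.keys G" "m \<noteq> e" for m
  proof (rule ccontr)
    assume nz: "(\<Prod>i\<le>n. psum (k m i)) \<noteq> (0::'a)"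
    have ge: "k m i \<ge> q - 1" if i: "i \<le> n" for i
    proof -
      have ps: "psum (k m i) \<noteq> (0::'a)" using nz i by auto
      have "k m i > 0" using psum_nz(1)[OF ps] .
      moreover have "(q - 1) dvd k m i" using psum_nz(2)[OF ps] q by simp
      ultimately show ?thesis by (simp add: dvd_imp_le)
    qed
    have eqs: "k m i = q - 1" if i: "i \<le> n" for i
    proof (rule ccontr)
      assume "k m i \<noteq> q - 1"
      then have lt: "q - 1 < k m i" using ge[OF i] by simp
      have "(\<Sum>i\<le>n. q - 1) < (\<Sum>i\<le>n. k m i)"
        by (rule sum_strict_mono_ex1) (use ge lt i in auto)
      moreover have "(\<Sum>i\<le>n. k m i) = (\<Sum>i\<le>n. q - 1)"
      proof -
        have "(\<Sum>i\<le>n. k m i) = (\<Sum>i\<le>n. Poly_Mapping.lookup m i) + (\<Sum>i\<le>n. q - 1 - Poly_Mapping.lookup e i)"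
          unfolding k_def by (simp add: sum.distrib)
        also have "\<dots> = (\<Sum>i\<le>n. Poly_Mapping.lookup e i) + (\<Sum>i\<le>n. q - 1 - Poly_Mapping.lookup e i)"
          using sdeg[OF m(1)] sdeg[OF e] by simp
        also have "\<dots> = (\<Sum>i\<le>n. Poly_Mapping.lookup e i + (q - 1 - Poly_Mapping.lookup e i))"
          by (simp add: sum.distrib)
        also have "\<dots> = (\<Sum>i\<le>n. q - 1)"
          using ele2 by (intro sum.cong refl) simp
        finally show ?thesis .
      qed
      ultimately show False by simp
    qed
    have "m = e"
    proof (rule poly_mapping_eqI)
      fix i
      show "Poly_Mapping.lookup m i = Poly_Mapping.lookup e i"
      proof (cases "i \<le> n")
        case True
        then show ?thesis using eqs[OF True] ele[of i] unfolding k_def by simp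
      next
        case False
        have "Poly_Mapping.keys m \<subseteq> {..n}" using m(1) vG unfolding vars_in_def by blast
        then have "Poly_Mapping.lookup m i = 0" using False by (auto simp: in_keys_iff)
        moreover have "Poly_Mapping.lookup e i = 0" using ke False by (auto simp: in_keys_iff)
        ultimately show ?thesis by simp
      qed
    qed
    then show False using m(2) by simp
  qed
  have T2: "T = Poly_Mapping.lookup G e * (-1) ^ (n + 1)"
  proof -
    have "T = Poly_Mapping.lookup G e * (\<Prod>i\<le>n. psum (k e i)) +
        (\<Sum>m\<in>Poly_Mapping.keys G - {e}. Poly_Mapping.lookup G m * (\<Prod>i\<le>n. psum (k m i)))"
      unfolding T1 using e by (simp add: sum.remove)
    also have "(\<Sum>m\<in>Poly_Mapping.keys G - {e}. Poly_Mapping.lookup G m * (\<Prod>i\<le>n. psum (k m i))) = 0"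
      using others by (intro sum.neutral) auto
    also have "(\<Prod>i\<le>n. psum (k e i)) = (\<Prod>i\<le>n. (-1::'a))"
    proof (intro prod.cong refl)
      fix i
      have "k e i = q - 1" unfolding k_def using ele[of i] by simp
      then show "psum (k e i) = (-1::'a)" using q q2 by (simp add: psum_div)
    qed
    finally show ?thesis by simp
  qed
  have T3: "T = 0"
  proof -
    have "\<exists>i0. i0 \<le> n \<and> Poly_Mapping.lookup e i0 < q - 1"
    proof (rule ccontr)
      assume "\<not> ?thesis"
      then have all: "\<And>i. i \<le> n \<Longrightarrow> Poly_Mapping.lookup e i \<ge> q - 1" by force
      have "(\<Sum>i\<in>{0,1}. Poly_Mapping.lookup e i) \<le> (\<Sum>i\<le>n. Poly_Mapping.lookup e i)"
        by (rule sum_mono2) (use n in auto)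
      also have "\<dots> = q - 1" using sdeg[OF e] .
      finally have "Poly_Mapping.lookup e 0 + Poly_Mapping.lookup e 1 \<le> q - 1" by simp
      moreover have "Poly_Mapping.lookup e 0 \<ge> q - 1" "Poly_Mapping.lookup e 1 \<ge> q - 1"
        using all n by auto
      ultimately show False using q2 by simp
    qed
    then obtain i0 where i0: "i0 \<le> n" "Poly_Mapping.lookup e i0 < q - 1" by blast
    have "T = (\<Sum>a\<in>A. c * w a)"
      unfolding T_def
    proof (intro sum.cong refl)
      fix a
      show "mpoly_eval G a * w a = c * w a"
      proof (cases "\<exists>i\<le>n. a i \<noteq> 0")
        case True
        then show ?thesis using val by simp
      next
        case False
        then have "a i0 = 0" using i0 by auto
        then have "a i0 ^ (q - 1 - Poly_Mapping.lookup e i0) = 0" using i0 by simp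
        then have "w a = 0" unfolding w_def using i0 by (intro prod_zero) auto
        then show ?thesis by simp
      qed
    qed
    also have "\<dots> = c * (\<Prod>i\<le>n. psum (q - 1 - Poly_Mapping.lookup e i))"
      unfolding A_def w_def by (simp add: sum_distrib_left[symmetric] sum_PiE_prod)
    also have "(\<Prod>i\<le>n. psum (q - 1 - Poly_Mapping.lookup e i)) = (0::'a)"
    proof (rule ccontr)
      assume nz: "(\<Prod>i\<le>n. psum (q - 1 - Poly_Mapping.lookup e i)) \<noteq> (0::'a)"
      have "Poly_Mapping.lookup e i = 0" if i: "i \<le> n" for i
      proof -
        have ps: "psum (q - 1 - Poly_Mapping.lookup e i) \<noteq> (0::'a)" using nz i by auto
        have "q - 1 - Poly_Mapping.lookup e i > 0" using psum_nz(1)[OF ps] .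
        moreover have "(q - 1) dvd (q - 1 - Poly_Mapping.lookup e i)" using psum_nz(2)[OF ps] q by simp
        ultimately have "q - 1 \<le> q - 1 - Poly_Mapping.lookup e i" by (simp add: dvd_imp_le)
        then show ?thesis using ele[of i] q2 by simp
      qed
      then have "(\<Sum>i\<le>n. Poly_Mapping.lookup e i) = 0" by simp
      then show False using sdeg[OF e] q2 by simp
    qed
    finally show ?thesis by simp
  qed
  have "Poly_Mapping.lookup G e = 0" using T2 T3 by simp
  then show False using e by (simp add: in_keys_iff)
qed


lemma lookup_single_mult:
  fixes P :: "'a::comm_ring_1 mpoly"
  shows "Poly_Mapping.lookup (Poly_Mapping.single k c * P) (k + b) = c * Poly_Mapping.lookup P b"
proof -
  have "Poly_Mapping.single k c * P = Poly_Mapping.single k c *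
      (\<Sum>b'\<in>Poly_Mapping.keys P. Poly_Mapping.single b' (Poly_Mapping.lookup P b'))"
    using pm_expand[of P] by simp
  also have "\<dots> = (\<Sum>b'\<in>Poly_Mapping.keys P. Poly_Mapping.single (k + b') (c * Poly_Mapping.lookup P b'))"
    by (simp add: sum_distrib_left mult_single)
  finally have "Poly_Mapping.lookup (Poly_Mapping.single k c * P) (k + b) =
     (\<Sum>b'\<in>Poly_Mapping.keys P. (c * Poly_Mapping.lookup P b' when k + b' = k + b))"
    by (simp add: lookup_sum lookup_single)
  also have "\<dots> = (\<Sum>b'\<in>Poly_Mapping.keys P. (if b' = b then c * Poly_Mapping.lookup P b' else 0))"
    by (intro sum.cong refl) (simp add: when_def)
  also have "\<dots> = c * Poly_Mapping.lookup P b"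
    by (simp add: in_keys_iff)
  finally show ?thesis .
qed

lemma keys_pderiv_deg:
  assumes "homogeneous d F" "b \<in> Poly_Mapping.keys (mpoly_pderiv i F)"
  shows "mon_deg b = d - 1"
proof -
  obtain m where "b = m - Poly_Mapping.single i 1" "m \<in> Poly_Mapping.keys F" "1 \<le> Poly_Mapping.lookup m i"
    using subsetD[OF keys_pderiv assms(2)] by blast
  moreover have "mon_deg m = d" using assms(1) \<open>m \<in> _\<close> unfolding homogeneous_def by blast
  ultimately show ?thesis using mon_deg_dec by simp
qed

lemma pderiv_zero:
  fixes F :: "'a::comm_ring_1 mpoly"
  assumes hF: "homogeneous d F" and dq: "d \<le> q" and d1: "d \<ge> 1"
    and H0: "(\<Sum>j\<le>n. mpoly_var j ^ q * mpoly_pderiv j F) = 0" and i: "i \<le> n"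
  shows "mpoly_pderiv i F = 0"
proof (rule ccontr)
  assume "mpoly_pderiv i F \<noteq> 0"
  then obtain b where b: "b \<in> Poly_Mapping.keys (mpoly_pderiv i F)" using keys_eq_empty by blast
  define t where "t = Poly_Mapping.single i q + b"
  have prod_eq: "Poly_Mapping.lookup (mpoly_var j ^ q * mpoly_pderiv j F) t =
      (if j = i then Poly_Mapping.lookup (mpoly_pderiv i F) b else 0)" for j
  proof (cases "j = i")
    case True
    then show ?thesis unfolding t_def var_power by (simp add: lookup_single_mult)
  next
    case False
    show ?thesis
    proof (rule ccontr)
      assume "\<not> ?thesis"
      then have "t \<in> Poly_Mapping.keys (mpoly_var j ^ q * mpoly_pderiv j F)"
        using False by (simp add: in_keys_iff)
      then have "t \<in> {u + b' | u b'. u \<in> Poly_Mapping.keys (mpoly_var j ^ q :: 'a mpoly) \<and> b' \<in> Poly_Mapping.keys (mpoly_pderiv j F)}"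
        by (rule subsetD[OF keys_mult])
      then obtain b' where tb: "t = Poly_Mapping.single j q + b'" and b': "b' \<in> Poly_Mapping.keys (mpoly_pderiv j F)"
        by (auto simp: var_power)
      have "Poly_Mapping.lookup t i = q + Poly_Mapping.lookup b i"
        unfolding t_def by (simp add: lookup_add)
      moreover have "Poly_Mapping.lookup t i = Poly_Mapping.lookup b' i"
        unfolding tb using False by (simp add: lookup_add lookup_single)
      moreover have "Poly_Mapping.lookup b' i \<le> d - 1"
        using lookup_le_mon_deg[of b' i] keys_pderiv_deg[OF hF b'] by simp
      ultimately show False using dq d1 by simp
    qed
  qed
  have "Poly_Mapping.lookup (\<Sum>j\<le>n. mpoly_var j ^ q * mpoly_pderiv j F) t = Poly_Mapping.lookup (mpoly_pderiv i F) b"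
    unfolding lookup_sum prod_eq using i by simp
  then show False using H0 b by (simp add: in_keys_iff)
qed

lemma lookup_pderiv:
  fixes F :: "'a::comm_ring_1 mpoly"
  assumes "1 \<le> Poly_Mapping.lookup m i"
  shows "Poly_Mapping.lookup (mpoly_pderiv i F) (m - Poly_Mapping.single i 1) = of_nat (Poly_Mapping.lookup m i) * Poly_Mapping.lookup F m"
proof -
  have "Poly_Mapping.lookup (mpoly_pderiv i F) (m - Poly_Mapping.single i 1) =
    (\<Sum>m'\<in>Poly_Mapping.keys F. (of_nat (Poly_Mapping.lookup m' i) * Poly_Mapping.lookup F m' when m' - Poly_Mapping.single i 1 = m - Poly_Mapping.single i 1))"
    unfolding mpoly_pderiv_def by (simp add: lookup_sum lookup_single)
  also have "\<dots> = (\<Sum>m'\<in>Poly_Mapping.keys F. (if m' = m then of_nat (Poly_Mapping.lookup m i) * Poly_Mapping.lookup F m else 0))"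
  proof (intro sum.cong refl)
    fix m'
    show "(of_nat (Poly_Mapping.lookup m' i) * Poly_Mapping.lookup F m' when m' - Poly_Mapping.single i 1 = m - Poly_Mapping.single i 1) =
      (if m' = m then of_nat (Poly_Mapping.lookup m i) * Poly_Mapping.lookup F m else 0)"
    proof (cases "m' = m")
      case True then show ?thesis by simp
    next
      case False
      show ?thesis
      proof (cases "Poly_Mapping.lookup m' i = 0")
        case True then show ?thesis using False by (simp add: when_def)
      next
        case False2: False
        have "m' - Poly_Mapping.single i 1 \<noteq> m - Poly_Mapping.single i 1"
        proof
          assume "m' - Poly_Mapping.single i 1 = m - Poly_Mapping.single i 1"
          then have "m' - Poly_Mapping.single i 1 + Poly_Mapping.single i 1 = m - Poly_Mapping.single i 1 + Poly_Mapping.single i 1"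
            by simp
          then have "m' = m" using minus_plus_single[of m' i] minus_plus_single[of m i] assms False2 by simp
          then show False using False by simp
        qed
        then show ?thesis using False by (simp add: when_def)
      qed
    qed
  qed
  also have "\<dots> = of_nat (Poly_Mapping.lookup m i) * Poly_Mapping.lookup F m"
    by (simp add: in_keys_iff)
  finally show ?thesis .
qed

lemma exps_div:
  fixes F :: "'a::idom mpoly"
  assumes "\<And>i. i \<le> n \<Longrightarrow> mpoly_pderiv i F = 0" "vars_in n F" "m \<in> Poly_Mapping.keys F"
  shows "CHAR('a) dvd Poly_Mapping.lookup m i"
proof (cases "Poly_Mapping.lookup m i = 0")
  case True then show ?thesis by simp
next
  case False
  then have "i \<in> Poly_Mapping.keys m" by (simp add: in_keys_iff)
  moreover have "Poly_Mapping.keys m \<subseteq> {..n}" using assms(2,3) unfolding vars_in_def by blast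
  ultimately have i: "i \<le> n" by blast
  have "of_nat (Poly_Mapping.lookup m i) * Poly_Mapping.lookup F m = (0::'a)"
    using lookup_pderiv[of m i F] False assms(1)[OF i] by simp
  moreover have "Poly_Mapping.lookup F m \<noteq> 0" using assms(3) by (simp add: in_keys_iff)
  ultimately have "of_nat (Poly_Mapping.lookup m i) = (0::'a)" by simp
  then show ?thesis by (simp only: of_nat_eq_0_iff_char_dvd)
qed

lemma spow: "Poly_Mapping.single (k :: nat \<Rightarrow>\<^sub>0 nat) (c::'a::comm_ring_1) ^ j = Poly_Mapping.single (Poly_Mapping.map ((*) j) k) (c ^ j)"
proof (induction j)
  case 0
  have "Poly_Mapping.map ((*) 0) k = (0 :: nat \<Rightarrow>\<^sub>0 nat)"
    by (rule poly_mapping_eqI) (simp add: map.rep_eq when_def)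
  then show ?case by (simp only: power_0 single_one)
next
  case (Suc j)
  have eq: "Poly_Mapping.map ((*) j) k + k = Poly_Mapping.map ((*) (Suc j)) k"
    by (rule poly_mapping_eqI) (simp add: map.rep_eq when_def lookup_add)
  have "Poly_Mapping.single k c ^ Suc j = Poly_Mapping.single (Poly_Mapping.map ((*) j) k) (c ^ j) * Poly_Mapping.single k c"
    by (simp only: power_Suc2 Suc.IH)
  also have "\<dots> = Poly_Mapping.single (Poly_Mapping.map ((*) j) k + k) (c ^ j * c)"
    by (rule mult_single)
  also have "\<dots> = Poly_Mapping.single (Poly_Mapping.map ((*) (Suc j)) k) (c ^ Suc j)"
    by (simp only: eq power_Suc2)
  finally show ?case .
qed

lemma fresh_sum:
  fixes f :: "'b \<Rightarrow> 'a::comm_ring_1"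
  assumes "prime p" "of_nat p = (0::'a)"
  shows "(\<Sum>x\<in>A. f x) ^ p = (\<Sum>x\<in>A. f x ^ p)"
proof (induction A rule: infinite_finite_induct)
  case (infinite A) then show ?case using assms(1) by (simp add: prime_gt_0_nat zero_power)
next
  case empty then show ?case using assms(1) by (simp add: prime_gt_0_nat zero_power)
next
  case (insert x F)
  then show ?case by (simp add: freshman[OF assms])
qed

lemma pth_power:
  fixes F :: "'a::{finite,field} mpoly"
  assumes p: "prime p" and cp: "CHAR('a) = p" and dv: "\<And>m i. m \<in> Poly_Mapping.keys F \<Longrightarrow> p dvd Poly_Mapping.lookup m i"
  shows "\<exists>G. F = G ^ p"
proof -
  have root: "\<exists>r. r ^ p = c" for c :: 'a using frob_surj[of c] p cp by simp
  define rt where "rt c = (SOME r. r ^ p = c)" for c :: 'a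
  have rt: "rt c ^ p = c" for c unfolding rt_def using someI_ex[OF root[of c]] .
  define md where "md m = Poly_Mapping.map (\<lambda>e. e div p) m" for m :: "nat \<Rightarrow>\<^sub>0 nat"
  define G where "G = (\<Sum>m\<in>Poly_Mapping.keys F. Poly_Mapping.single (md m) (rt (Poly_Mapping.lookup F m)))"
  have ofp: "of_nat p = (0::'a mpoly)"
  proof -
    have "of_nat p = (0::'a)" using cp of_nat_CHAR[where 'a='a] by simp
    then show ?thesis using single_of_nat[of p, where 'b='a, symmetric] by simp
  qed
  have mdm: "Poly_Mapping.map ((*) p) (md m) = m" if m: "m \<in> Poly_Mapping.keys F" for m
  proof (rule poly_mapping_eqI)
    fix x
    show "Poly_Mapping.lookup (Poly_Mapping.map ((*) p) (md m)) x = Poly_Mapping.lookup m x"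
    proof (cases "Poly_Mapping.lookup m x = 0")
      case True then show ?thesis unfolding md_def by (simp add: map.rep_eq when_def)
    next
      case False
      have "p dvd Poly_Mapping.lookup m x" using dv[OF m] .
      then obtain t where t: "Poly_Mapping.lookup m x = p * t" by blast
      then have "t \<noteq> 0" using False by simp
      then show ?thesis unfolding md_def using t p False by (simp add: map.rep_eq when_def prime_gt_0_nat)
    qed
  qed
  have "G ^ p = (\<Sum>m\<in>Poly_Mapping.keys F. Poly_Mapping.single (md m) (rt (Poly_Mapping.lookup F m)) ^ p)"
    unfolding G_def by (rule fresh_sum[OF p ofp])
  also have "\<dots> = (\<Sum>m\<in>Poly_Mapping.keys F. Poly_Mapping.single m (Poly_Mapping.lookup F m))"
    by (intro sum.cong refl) (simp add: spow mdm rt)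
  also have "\<dots> = F" using pm_expand[of F] by simp
  finally show ?thesis by metis
qed


theorem corollary2p4:
  fixes F :: "('a::{finite,field}) mpoly" and p q n d :: nat
  assumes "prime p" and "\<exists>k\<ge>1. q = p ^ k" and "card (UNIV :: 'a set) = q"
    and "n \<ge> 1" and "d \<ge> 1"
    and "F \<noteq> 0" and "homogeneous d F" and "vars_in n F"
    and "frobenius_nonclassical q n F"
    and "d \<le> q + 1"
    and "\<not> (\<exists>G. F = G ^ p)"
  shows "\<exists>a :: nat \<Rightarrow> 'a. (\<exists>i\<le>n. a i \<noteq> 0) \<and> mpoly_eval F a = 0"
proof (rule ccontr)
  assume nz: "\<not> (\<exists>a :: nat \<Rightarrow> 'a. (\<exists>i\<le>n. a i \<noteq> 0) \<and> mpoly_eval F a = 0)"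
  then have Fnz: "\<And>a. (\<exists>i\<le>n. a i \<noteq> 0) \<Longrightarrow> mpoly_eval F a \<noteq> 0" by blast
  define H where "H = (\<Sum>i\<le>n. mpoly_var i ^ q * mpoly_pderiv i F)"
  from assms(9) obtain G where HG: "H = F * G"
    unfolding frobenius_nonclassical_def H_def by (auto elim: dvdE)
  obtain k where k: "k \<ge> 1" "q = p ^ k" using assms(2) by blast
  have cp: "CHAR('a) = p" using CHAR_ff[OF assms(1)] assms(3) k by simp
  have Hh: "homogeneous (d + q - 1) H" and Hv: "vars_in n H"
    using keys_H[OF assms(7,8,5)] unfolding H_def by simp_all
  have aq: "\<And>x::'a. x ^ q = x" using ff_power_card assms(3) by metis
  have evalH: "mpoly_eval H a = of_nat d * mpoly_eval F a" for a
  proof -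
    have "mpoly_eval H a = (\<Sum>i\<le>n. a i ^ q * mpoly_eval (mpoly_pderiv i F) a)"
      unfolding H_def by (simp add: eval_sum eval_mult eval_power eval_var)
    also have "\<dots> = (\<Sum>i\<le>n. a i * mpoly_eval (mpoly_pderiv i F) a)"
      by (simp only: aq)
    also have "\<dots> = of_nat d * mpoly_eval F a" by (rule euler[OF assms(7,8)])
    finally show ?thesis .
  qed
  have Gval: "mpoly_eval G a = of_nat d" if a: "\<exists>i\<le>n. a i \<noteq> 0" for a
  proof -
    have "mpoly_eval F a * mpoly_eval G a = mpoly_eval F a * of_nat d"
      using evalH[of a] HG by (simp add: eval_mult mult.commute)
    then show ?thesis using Fnz[OF a] by simp
  qed
  have q1: "q \<ge> 1" using assms(3) finite_UNIV_card_ge_0[where ?'a='a] by simp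
  show False
  proof (cases "H = 0")
    case True
    have one: "\<exists>i\<le>n. (\<lambda>_. 1::'a) i \<noteq> 0" by auto
    have "mpoly_eval F (\<lambda>_. 1::'a) \<noteq> 0" using Fnz[OF one] .
    moreover have "of_nat d * mpoly_eval F (\<lambda>_. 1::'a) = 0" using evalH[of "\<lambda>_. 1"] True by simp
    ultimately have "of_nat d = (0::'a)" by simp
    then have pd: "p dvd d" using cp of_nat_eq_0_iff_char_dvd by metis
    have pq: "p dvd q" using k by (simp add: dvd_power)
    have "d \<noteq> q + 1"
    proof
      assume "d = q + 1"
      then have pq1: "p dvd q + 1" using pd by simp
      have "p dvd 1" using iffD1[OF dvd_add_right_iff[OF pq] pq1] .
      then show False using assms(1) by simp
    qed
    then have dq: "d \<le> q" using assms(10) by simp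
    have pdz: "\<And>i. i \<le> n \<Longrightarrow> mpoly_pderiv i F = 0"
      using pderiv_zero[OF assms(7) dq assms(5)] True unfolding H_def by blast
    have "\<And>m i. m \<in> Poly_Mapping.keys F \<Longrightarrow> p dvd Poly_Mapping.lookup m i"
      using exps_div[OF pdz assms(8)] cp by simp
    then obtain G' where "F = G' ^ p" using pth_power[OF assms(1) cp] by blast
    then show False using assms(11) by blast
  next
    case False
    then have G0: "G \<noteq> 0" using HG by auto
    have vG: "vars_in n G" using G_vars[OF assms(6,8)] HG Hv by simp
    have "homogeneous (d + (q - 1)) (F * G)" using Hh HG q1 by simp
    then have hG: "homogeneous (q - 1) G" using G_homog[OF assms(6,7)] by blast
    show False using sum_contra[OF assms(3) assms(4) G0 vG hG Gval] .
  qed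
qed

end
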